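(* Let $\Lambda$ be a Euclidean lattice of minimum $m$ and rank $d$ containing two distinct sublattices $\Lambda'$ and $\Lambda''$ which are both perfect, of minimum $m$ and of rank $d-1$. Suppose that $\Lambda'+\Lambda''$ has rank $d$, and that $\Lambda$ contains a minimal vector $v$ such that $\mathbb Qv\cap\Lambda'=\mathbb Qv\cap\Lambda''=\{0\}$. Then $\Lambda$ is perfect.
   Context: The minimum of a lattice is the smallest squared Euclidean norm of a nonzero element; minimal vectors are the nonzero elements realising it. A lattice $L$ of rank $n$ is perfect if $\{v\otimes v\}$, $v$ ranging over its minimal vectors, spans the $\binom{n+1}{2}$-dimensional space of symmetric tensors in $(L\otimes\mathbb R)\otimes(L\otimes\mathbb R)$. *)

theory Defs
  imports "HOL-Analysis.Analysis"
begin

definition euclidean_lattice :: "(real^'n) set \<Rightarrow> bool" where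
  "euclidean_lattice L \<longleftrightarrow>
     (\<exists>B. independent B \<and> L = range (\<lambda>c::(real^'n) \<Rightarrow> int. \<Sum>b\<in>B. of_int (c b) *\<^sub>R b))"

definition lattice_rank :: "(real^'n) set \<Rightarrow> nat" where
  "lattice_rank L = dim L"

definition sublattice :: "(real^'n) set \<Rightarrow> (real^'n) set \<Rightarrow> bool" where
  "sublattice L' L \<longleftrightarrow> euclidean_lattice L' \<and> L' \<subseteq> L"

definition lattice_min :: "(real^'n) set \<Rightarrow> real" where
  "lattice_min L = Inf {(norm v)^2 | v. v \<in> L \<and> v \<noteq> 0}"

definition min_vectors :: "(real^'n) set \<Rightarrow> (real^'n) set" where
  "min_vectors L = {v \<in> L. v \<noteq> 0 \<and> (norm v)^2 = lattice_min L}"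

definition outer_sq :: "real^'n \<Rightarrow> real^'n^'n" where
  "outer_sq v = (\<chi> i j. v $ i * v $ j)"

text \<open>Perfect: the tensors v \<otimes> v over minimal vectors span the space of symmetric
  tensors on span L, which has dimension binomial (rank+1) 2; since all v \<otimes> v lie in it,
  this says their span has that dimension.\<close>
definition perfect :: "(real^'n) set \<Rightarrow> bool" where
  "perfect L \<longleftrightarrow> dim (outer_sq ` min_vectors L) = (lattice_rank L + 1) choose 2"

definition lattice_sum :: "(real^'n) set \<Rightarrow> (real^'n) set \<Rightarrow> (real^'n) set" where
  "lattice_sum A B = {x + y | x y. x \<in> A \<and> y \<in> B}"

definition rat_line :: "real^'n \<Rightarrow> (real^'n) set" where
  "rat_line v = {of_rat q *\<^sub>R v | q. True}"

end

theory Submission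
  imports Defs
begin


definition outer :: "real^'n \<Rightarrow> real^'n \<Rightarrow> real^'n^'n" where
  "outer x y = (\<chi> i j. x $ i * y $ j)"

lemma outer_sq_expand:
  fixes B :: "(real^'n) set" and c :: "real^'n \<Rightarrow> real"
  assumes "finite B"
  shows "outer_sq (\<Sum>b\<in>B. c b *\<^sub>R b) =
    (\<Sum>b\<in>B. \<Sum>b'\<in>B. (c b * c b' / 2) *\<^sub>R (outer b b' + outer b' b))"
proof -
  have "(\<Sum>b\<in>B. c b * b $ i) * (\<Sum>b\<in>B. c b * b $ j) =
     (\<Sum>b\<in>B. \<Sum>b'\<in>B. c b * c b' / 2 * (b $ i * b' $ j + b' $ i * b $ j))" for i j
  proof -
    have "(\<Sum>b\<in>B. \<Sum>b'\<in>B. c b * c b' / 2 * (b $ i * b' $ j + b' $ i * b $ j))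
       = (\<Sum>b\<in>B. \<Sum>b'\<in>B. c b * c b' / 2 * (b $ i * b' $ j)) +
         (\<Sum>b\<in>B. \<Sum>b'\<in>B. c b * c b' / 2 * (b' $ i * b $ j))"
      by (simp add: distrib_left sum.distrib)
    also have "(\<Sum>b\<in>B. \<Sum>b'\<in>B. c b * c b' / 2 * (b' $ i * b $ j)) =
       (\<Sum>b\<in>B. \<Sum>b'\<in>B. c b * c b' / 2 * (b $ i * b' $ j))"
      by (subst sum.swap) (simp add: mult_ac)
    also have "(\<Sum>b\<in>B. \<Sum>b'\<in>B. c b * c b' / 2 * (b $ i * b' $ j)) +
       (\<Sum>b\<in>B. \<Sum>b'\<in>B. c b * c b' / 2 * (b $ i * b' $ j)) =
       (\<Sum>b\<in>B. \<Sum>b'\<in>B. (c b * b $ i) * (c b' * b' $ j))"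
      by (simp add: sum.distrib[symmetric] field_simps)
    also have "\<dots> = (\<Sum>b\<in>B. c b * b $ i) * (\<Sum>b\<in>B. c b * b $ j)"
      by (simp add: sum_product)
    finally show ?thesis by simp
  qed
  then show ?thesis
    by (simp add: vec_eq_iff outer_sq_def outer_def sum_component)
qed

lemma outer_sq_span_dim:
  fixes X :: "(real^'n) set"
  shows "dim (outer_sq ` span X) \<le> (dim X + 1) choose 2"
proof -
  obtain B where BX: "B \<subseteq> X" and indB: "independent B" and XB: "X \<subseteq> span B"
    and cB: "card B = dim X"
    using basis_exists[of X] by metis
  have fB: "finite B" using indB finiteI_independent by blast
  have spXB: "span X = span B"
    using BX XB span_mono span_span by (metis subset_antisym span_minimal subspace_span)
  define I where "I = {A. A \<subseteq> B \<and> card A = 1} \<union> {A. A \<subseteq> B \<and> card A = 2}"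
  define G where "G = (\<lambda>A. outer_sq (\<Sum>A)) ` I"
  have fI: "finite I" unfolding I_def using fB by auto
  have cI: "card I = (card B choose 1) + (card B choose 2)"
    unfolding I_def
    by (subst card_Un_disjoint) (use fB in \<open>auto simp: n_subsets\<close>)
  have cG: "card G \<le> card I" unfolding G_def using fI card_image_le by blast
  have fG: "finite G" unfolding G_def using fI by simp
  have osq: "outer_sq x = outer x x" for x :: "real^'n"
    by (simp add: outer_sq_def outer_def)
  have sym: "outer x y + outer y x \<in> span G" if "x \<in> B" "y \<in> B" for x y
  proof (cases "x = y")
    case True
    have "{x} \<in> I" using that unfolding I_def by auto
    then have "outer_sq x \<in> span G" unfolding G_def
      by (auto intro!: span_base image_eqI[where x="{x}"])
    then have "2 *\<^sub>R outer_sq x \<in> span G" by (rule span_scale)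
    then show ?thesis using True by (simp add: osq scaleR_2)
  next
    case False
    have "{x} \<in> I" "{y} \<in> I" "{x,y} \<in> I" using that False unfolding I_def by auto
    then have "outer_sq (\<Sum>{x}) \<in> G" "outer_sq (\<Sum>{y}) \<in> G" "outer_sq (\<Sum>{x,y}) \<in> G"
      unfolding G_def by blast+
    then have "outer_sq x \<in> span G" "outer_sq y \<in> span G" "outer_sq (x + y) \<in> span G"
      using False by (auto intro: span_base)
    then have "outer_sq (x + y) - outer_sq x - outer_sq y \<in> span G"
      by (intro span_diff)
    moreover have "outer_sq (x + y) - outer_sq x - outer_sq y = outer x y + outer y x"
      by (simp add: vec_eq_iff outer_sq_def outer_def algebra_simps)
    ultimately show ?thesis by simp
  qed
  have "outer_sq ` span X \<subseteq> span G"
  proof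
    fix M assume "M \<in> outer_sq ` span X"
    then obtain u where u: "u \<in> span B" "M = outer_sq u" using spXB by auto
    then obtain c where "u = (\<Sum>b\<in>B. c b *\<^sub>R b)" using span_finite[OF fB] by auto
    then have "M = (\<Sum>b\<in>B. \<Sum>b'\<in>B. (c b * c b' / 2) *\<^sub>R (outer b b' + outer b' b))"
      using u outer_sq_expand[OF fB] by simp
    also have "\<dots> \<in> span G"
      by (intro span_sum span_scale sym) auto
    finally show "M \<in> span G" .
  qed
  then have "dim (outer_sq ` span X) \<le> card G" using dim_le_card fG by blast
  also have "\<dots> \<le> (dim X + 1) choose 2" using cG cI cB by (simp add: numeral_2_eq_2)
  finally show ?thesis .
qed



lemma lattice_diff:
  fixes L :: "(real^'n) set"
  assumes "euclidean_lattice L" "x \<in> L" "y \<in> L" shows "x - y \<in> L"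
proof -
  obtain B where L: "L = range (\<lambda>c::(real^'n) \<Rightarrow> int. \<Sum>b\<in>B. of_int (c b) *\<^sub>R b)"
    using assms(1) unfolding euclidean_lattice_def by blast
  obtain cx cy where "x = (\<Sum>b\<in>B. of_int (cx b) *\<^sub>R b)" "y = (\<Sum>b\<in>B. of_int (cy b) *\<^sub>R b)"
    using assms(2,3) L by auto
  then have "x - y = (\<Sum>b\<in>B. of_int ((\<lambda>b. cx b - cy b) b) *\<^sub>R b)"
    by (simp add: sum_subtractf scaleR_diff_left)
  then show ?thesis unfolding L by (intro image_eqI[where x="\<lambda>b. cx b - cy b"]) auto
qed

lemma lattice_scale:
  fixes L :: "(real^'n) set"
  assumes "euclidean_lattice L" "x \<in> L" shows "of_int k *\<^sub>R x \<in> L"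
proof -
  obtain B where L: "L = range (\<lambda>c::(real^'n) \<Rightarrow> int. \<Sum>b\<in>B. of_int (c b) *\<^sub>R b)"
    using assms(1) unfolding euclidean_lattice_def by blast
  obtain cx where "x = (\<Sum>b\<in>B. of_int (cx b) *\<^sub>R b)"
    using assms(2) L by auto
  then have "of_int k *\<^sub>R x = (\<Sum>b\<in>B. of_int ((\<lambda>b. k * cx b) b) *\<^sub>R b)"
    by (simp add: scaleR_sum_right)
  then show ?thesis unfolding L by (intro image_eqI[where x="\<lambda>b. k * cx b"]) auto
qed

lemma lattice_bounded_finite:
  fixes L :: "(real^'n) set"
  assumes "euclidean_lattice L" shows "finite {x \<in> L. norm x \<le> R}"
proof -
  obtain B where indB: "independent B"
    and L: "L = range (\<lambda>c::(real^'n) \<Rightarrow> int. \<Sum>b\<in>B. of_int (c b) *\<^sub>R b)"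
    using assms(1) unfolding euclidean_lattice_def by blast
  have fB: "finite B" using indB finiteI_independent by blast
  have "\<exists>N. \<forall>c::(real^'n) \<Rightarrow> int. norm (\<Sum>b\<in>B. of_int (c b) *\<^sub>R b) \<le> R \<longrightarrow> \<bar>of_int (c \<beta>)\<bar> \<le> (N::real)"
    if "\<beta> \<in> B" for \<beta>
  proof -
    obtain g :: "real^'n \<Rightarrow> real" where g: "linear g" "\<forall>x\<in>B. g x = (if x = \<beta> then 1 else 0)"
      using real_vector.linear_independent_extend[OF indB, of "\<lambda>x. if x = \<beta> then 1 else 0"] by blast
    obtain C where C: "\<forall>x. norm (g x) \<le> C * norm x" using linear_bounded[OF g(1)] by blast
    show ?thesis
    proof (intro exI allI impI)
      fix c :: "(real^'n) \<Rightarrow> int"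
      assume R: "norm (\<Sum>b\<in>B. of_int (c b) *\<^sub>R b) \<le> R"
      have "g (\<Sum>b\<in>B. of_int (c b) *\<^sub>R b) = (\<Sum>b\<in>B. of_int (c b) * g b)"
        using g(1) by (simp add: linear_sum linear_scale)
      also have "\<dots> = (\<Sum>b\<in>B. if b = \<beta> then of_int (c b) else 0)"
        using g(2) by (intro sum.cong) auto
      also have "\<dots> = of_int (c \<beta>)" using fB that by simp
      finally have "\<bar>of_int (c \<beta>)\<bar> \<le> C * norm (\<Sum>b\<in>B. of_int (c b) *\<^sub>R b)"
        using C[rule_format, of "\<Sum>b\<in>B. of_int (c b) *\<^sub>R b"] by simp
      also have "\<dots> \<le> \<bar>C\<bar> * norm (\<Sum>b\<in>B. of_int (c b) *\<^sub>R b)"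
        by (intro mult_right_mono) auto
      also have "\<dots> \<le> \<bar>C\<bar> * R"
        using R by (intro mult_left_mono) auto
      finally show "\<bar>real_of_int (c \<beta>)\<bar> \<le> \<bar>C\<bar> * R" .
    qed
  qed
  then have "\<forall>\<beta>\<in>B. \<exists>N::real. \<forall>c::(real^'n) \<Rightarrow> int. norm (\<Sum>b\<in>B. of_int (c b) *\<^sub>R b) \<le> R \<longrightarrow> \<bar>of_int (c \<beta>)\<bar> \<le> N"
    by blast
  from bchoice[OF this] obtain Nf :: "real^'n \<Rightarrow> real" where Nf0: "\<forall>\<beta>\<in>B. \<forall>c::(real^'n) \<Rightarrow> int. norm (\<Sum>b\<in>B. of_int (c b) *\<^sub>R b) \<le> R \<longrightarrow> \<bar>of_int (c \<beta>)\<bar> \<le> Nf \<beta>"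
    by (rule exE)
  have Nf: "\<And>\<beta> c. \<beta> \<in> B \<Longrightarrow> norm (\<Sum>b\<in>B. of_int (c b) *\<^sub>R b) \<le> R \<Longrightarrow> \<bar>of_int (c \<beta>)\<bar> \<le> Nf \<beta>"
    using Nf0 by blast
  define M where "M = \<lceil>\<Sum>\<beta>\<in>B. \<bar>Nf \<beta>\<bar>\<rceil>"
  have "{x \<in> L. norm x \<le> R} \<subseteq> (\<lambda>c. \<Sum>b\<in>B. of_int (c b) *\<^sub>R b) ` (PiE B (\<lambda>_. {-M..M}))"
  proof
    fix x assume "x \<in> {x \<in> L. norm x \<le> R}"
    then obtain c where x: "x = (\<Sum>b\<in>B. of_int (c b) *\<^sub>R b)" and R: "norm x \<le> R" using L by auto
    have r1: "restrict c B \<in> PiE B (\<lambda>_. {-M..M})"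
    proof (rule restrict_PiE_iff[THEN iffD2], intro ballI)
      fix \<beta> assume b: "\<beta> \<in> B"
      have "\<bar>of_int (c \<beta>)\<bar> \<le> Nf \<beta>" using Nf[OF b, of c] R x by simp
      also have "\<dots> \<le> (\<Sum>\<beta>\<in>B. \<bar>Nf \<beta>\<bar>)" using member_le_sum[OF b, of "\<lambda>\<beta>. \<bar>Nf \<beta>\<bar>"] fB by simp
      also have "\<dots> \<le> of_int M" unfolding M_def by simp
      finally have "\<bar>c \<beta>\<bar> \<le> M" by linarith
      then show "c \<beta> \<in> {-M..M}" by auto
    qed
    have r2: "x = (\<Sum>b\<in>B. of_int (restrict c B b) *\<^sub>R b)" unfolding x
      by (rule sum.cong[OF refl]) simp
    show "x \<in> (\<lambda>c. \<Sum>b\<in>B. of_int (c b) *\<^sub>R b) ` (PiE B (\<lambda>_. {-M..M}))"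
      by (rule image_eqI[where x="restrict c B"]) (fact r2, fact r1)
  qed
  moreover have "finite (PiE B (\<lambda>_. {-M..M}))" using fB by (intro finite_PiE) auto
  ultimately show ?thesis using finite_subset by blast
qed

lemma rat_multiple:
  fixes L L' :: "(real^'n) set"
  assumes "euclidean_lattice L" "euclidean_lattice L'" "L' \<subseteq> L" "v \<in> L" "v \<in> span L'"
  shows "\<exists>k::nat. k > 0 \<and> of_nat k *\<^sub>R v \<in> L'"
proof -
  obtain B where indB: "independent B"
    and L': "L' = range (\<lambda>c::(real^'n) \<Rightarrow> int. \<Sum>b\<in>B. of_int (c b) *\<^sub>R b)"
    using assms(2) unfolding euclidean_lattice_def by blast
  have fB: "finite B" using indB finiteI_independent by blast
  have BL: "B \<subseteq> L'"
  proof
    fix b assume b: "b \<in> B"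
    have "(\<Sum>x\<in>B. of_int ((\<lambda>x. if x = b then 1 else 0) x) *\<^sub>R x) = b"
    proof -
      have "(\<Sum>x\<in>B. of_int ((\<lambda>x. if x = b then 1 else 0) x) *\<^sub>R x) = (\<Sum>x\<in>B. if x = b then x else 0)"
        by (intro sum.cong) auto
      then show ?thesis using fB b by simp
    qed
    then show "b \<in> L'" unfolding L' by (intro image_eqI[where x="\<lambda>x. if x = b then 1 else 0"]) auto
  qed
  have "L' \<subseteq> span B"
  proof
    fix x assume "x \<in> L'"
    then obtain c where "x = (\<Sum>b\<in>B. of_int (c b) *\<^sub>R b)" unfolding L' by blast
    then show "x \<in> span B" by (simp add: span_sum span_scale span_base)
  qed
  then have "span L' = span B" using BL by (metis span_minimal subspace_span span_mono subset_antisym)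
  then obtain r where vr: "v = (\<Sum>b\<in>B. r b *\<^sub>R b)" using assms(5) span_finite[OF fB] by auto
  define y where "y k = (\<Sum>b\<in>B. of_int (\<lfloor>real k * r b\<rfloor>) *\<^sub>R b)" for k :: nat
  define w where "w k = (\<Sum>b\<in>B. frac (real k * r b) *\<^sub>R b)" for k :: nat
  have yL: "y k \<in> L'" for k unfolding y_def L' by (intro image_eqI[where x="\<lambda>b. \<lfloor>real k * r b\<rfloor>"]) auto
  have wy: "w k = of_int (int k) *\<^sub>R v - y k" for k
    unfolding w_def y_def vr frac_def
    by (simp add: scaleR_diff_left sum_subtractf scaleR_sum_right)
  have wL: "w k \<in> L" for k
    unfolding wy using lattice_diff[OF assms(1) lattice_scale[OF assms(1,4)]] yL assms(3) by blast
  have wn: "norm (w k) \<le> (\<Sum>b\<in>B. norm b)" for k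
  proof -
    have "norm (w k) \<le> (\<Sum>b\<in>B. norm (frac (real k * r b) *\<^sub>R b))"
      unfolding w_def by (rule norm_sum)
    also have "\<dots> \<le> (\<Sum>b\<in>B. norm b)"
    proof (rule sum_mono)
      fix b
      have "\<bar>frac (real k * r b)\<bar> \<le> 1" using frac_lt_1 frac_ge_0
        by (metis abs_of_nonneg less_eq_real_def)
      then show "norm (frac (real k * r b) *\<^sub>R b) \<le> norm b"
        by (simp add: mult_left_le_one_le)
    qed
    finally show ?thesis .
  qed
  have "range w \<subseteq> {x \<in> L. norm x \<le> (\<Sum>b\<in>B. norm b)}" using wL wn by auto
  then have "finite (range w)" using lattice_bounded_finite[OF assms(1)] finite_subset by blast
  then have "\<not> inj w" using finite_imageD infinite_UNIV_nat by blast
  then obtain k1 k2 where kk: "k1 \<noteq> k2" "w k1 = w k2" unfolding inj_def by blast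
  have fr: "frac (real k1 * r b) = frac (real k2 * r b)" if "b \<in> B" for b
  proof -
    have "(\<Sum>b\<in>B. (frac (real k1 * r b) - frac (real k2 * r b)) *\<^sub>R b) = 0"
      using kk(2) unfolding w_def by (simp add: scaleR_diff_left sum_subtractf)
    then show ?thesis using indB fB that unfolding independent_explicit by fastforce
  qed
  show ?thesis
  proof (cases "k1 < k2")
    case True
    define z where "z b = \<lfloor>real k2 * r b\<rfloor> - \<lfloor>real k1 * r b\<rfloor>" for b
    have "of_nat (k2 - k1) *\<^sub>R v = (\<Sum>b\<in>B. of_int (z b) *\<^sub>R b)"
    proof -
      have "of_nat (k2 - k1) *\<^sub>R v = (\<Sum>b\<in>B. (real k2 * r b - real k1 * r b) *\<^sub>R b)"
        unfolding vr using True by (simp add: scaleR_sum_right of_nat_diff algebra_simps)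
      also have "\<dots> = (\<Sum>b\<in>B. of_int (z b) *\<^sub>R b)"
      proof (rule sum.cong[OF refl])
        fix b assume "b \<in> B"
        then have "real k2 * r b - real k1 * r b = of_int (z b)"
          using fr[of b] unfolding z_def frac_def by simp
        then show "(real k2 * r b - real k1 * r b) *\<^sub>R b = of_int (z b) *\<^sub>R b" by simp
      qed
      finally show ?thesis .
    qed
    then show ?thesis using True unfolding L' by (intro exI[where x="_ - _"] conjI image_eqI[where x=z]) auto
  next
    case False
    then have F: "k2 < k1" using kk(1) by simp
    define z where "z b = \<lfloor>real k1 * r b\<rfloor> - \<lfloor>real k2 * r b\<rfloor>" for b
    have "of_nat (k1 - k2) *\<^sub>R v = (\<Sum>b\<in>B. of_int (z b) *\<^sub>R b)"
    proof -
      have "of_nat (k1 - k2) *\<^sub>R v = (\<Sum>b\<in>B. (real k1 * r b - real k2 * r b) *\<^sub>R b)"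
        unfolding vr using F by (simp add: scaleR_sum_right of_nat_diff algebra_simps)
      also have "\<dots> = (\<Sum>b\<in>B. of_int (z b) *\<^sub>R b)"
      proof (rule sum.cong[OF refl])
        fix b assume "b \<in> B"
        then have "real k1 * r b - real k2 * r b = of_int (z b)"
          using fr[of b] unfolding z_def frac_def by simp
        then show "(real k1 * r b - real k2 * r b) *\<^sub>R b = of_int (z b) *\<^sub>R b" by simp
      qed
      finally show ?thesis .
    qed
    then show ?thesis using F unfolding L' by (intro exI[where x="_ - _"] conjI image_eqI[where x=z]) auto
  qed
qed



lemma outer_mv: "outer_sq x *v a = (x \<bullet> a) *\<^sub>R x"
  by (simp add: vec_eq_iff outer_sq_def matrix_vector_mult_def inner_vec_def sum_distrib_left mult_ac)

lemma linear_mv: "linear (\<lambda>M::real^'n^'n. M *v a)"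
  by (rule linearI) (simp_all add: matrix_vector_mult_add_rdistrib scaleR_matrix_vector_assoc)

theorem corollary2p4:
  fixes \<Lambda> \<Lambda>' \<Lambda>'' :: "(real^'n) set" and m :: real and d :: nat and v :: "real^'n"
  assumes "euclidean_lattice \<Lambda>" and "lattice_min \<Lambda> = m" and "lattice_rank \<Lambda> = d"
    and "sublattice \<Lambda>' \<Lambda>" and "sublattice \<Lambda>'' \<Lambda>" and "\<Lambda>' \<noteq> \<Lambda>''"
    and "perfect \<Lambda>'" and "perfect \<Lambda>''"
    and "lattice_min \<Lambda>' = m" and "lattice_min \<Lambda>'' = m"
    and "lattice_rank \<Lambda>' + 1 = d" and "lattice_rank \<Lambda>'' + 1 = d"
    and "lattice_rank (lattice_sum \<Lambda>' \<Lambda>'') = d"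
    and "v \<in> min_vectors \<Lambda>"
    and "rat_line v \<inter> \<Lambda>' = {0}" and "rat_line v \<inter> \<Lambda>'' = {0}"
  shows "perfect \<Lambda>"
proof -
  note lat = assms(1)
  have L1: "euclidean_lattice \<Lambda>'" "\<Lambda>' \<subseteq> \<Lambda>" using assms(4) unfolding sublattice_def by auto
  have L2: "euclidean_lattice \<Lambda>''" "\<Lambda>'' \<subseteq> \<Lambda>" using assms(5) unfolding sublattice_def by auto
  have dL: "dim \<Lambda> = d" using assms(3) unfolding lattice_rank_def .
  have dL1: "dim \<Lambda>' + 1 = d" using assms(11) unfolding lattice_rank_def .
  have dL2: "dim \<Lambda>'' + 1 = d" using assms(12) unfolding lattice_rank_def .
  have p1: "dim (outer_sq ` min_vectors \<Lambda>') = d choose 2"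
    using assms(7) dL1 unfolding perfect_def lattice_rank_def by simp
  have p2: "dim (outer_sq ` min_vectors \<Lambda>'') = d choose 2"
    using assms(8) dL2 unfolding perfect_def lattice_rank_def by simp
  have MV1: "min_vectors \<Lambda>' \<subseteq> min_vectors \<Lambda>"
    using L1 assms(2,9) unfolding min_vectors_def by auto
  have MV2: "min_vectors \<Lambda>'' \<subseteq> min_vectors \<Lambda>"
    using L2 assms(2,10) unfolding min_vectors_def by auto
  have vL: "v \<in> \<Lambda>" "v \<noteq> 0" using assms(14) unfolding min_vectors_def by auto
  have notin: "v \<notin> span L'" if h: "euclidean_lattice L'" "L' \<subseteq> \<Lambda>" "rat_line v \<inter> L' = {0}" for L'
  proof
    assume "v \<in> span L'"
    then obtain k :: nat where k: "k > 0" "of_nat k *\<^sub>R v \<in> L'"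
      using rat_multiple[OF lat h(1,2) vL(1)] by blast
    have "of_nat k *\<^sub>R v \<in> rat_line v" unfolding rat_line_def
      by (rule CollectI, rule exI[where x="of_nat k"]) simp
    then have "of_nat k *\<^sub>R v = 0" using k h(3) by blast
    then show False using k vL by simp
  qed
  have nv1: "v \<notin> span \<Lambda>'" using notin L1 assms(15) by blast
  have nv2: "v \<notin> span \<Lambda>''" using notin L2 assms(16) by blast
  have LS: "\<Lambda> \<subseteq> span (\<Lambda>' \<union> \<Lambda>'')"
  proof -
    have s1: "lattice_sum \<Lambda>' \<Lambda>'' \<subseteq> span (\<Lambda>' \<union> \<Lambda>'')"
      unfolding lattice_sum_def by (auto intro!: span_add intro: span_base)
    have s2: "lattice_sum \<Lambda>' \<Lambda>'' \<subseteq> span \<Lambda>"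
      unfolding lattice_sum_def using L1 L2 by (auto intro!: span_add intro: span_base)
    have "dim (span \<Lambda>) \<le> dim (lattice_sum \<Lambda>' \<Lambda>'')"
      using assms(13) dL unfolding lattice_rank_def by simp
    then have "span (lattice_sum \<Lambda>' \<Lambda>'') = span (span \<Lambda>)"
      using dim_eq_span[OF s2] by blast
    then have "\<Lambda> \<subseteq> span (lattice_sum \<Lambda>' \<Lambda>'')" by (metis span_span span_superset)
    also have "\<dots> \<subseteq> span (\<Lambda>' \<union> \<Lambda>'')" using s1 by (metis span_minimal subspace_span)
    finally show ?thesis .
  qed
  have "span \<Lambda>' \<subset> span \<Lambda>"
  proof -
    have "span \<Lambda>' \<subseteq> span \<Lambda>" using L1 span_mono by blast
    moreover have "dim (span \<Lambda>') \<noteq> dim (span \<Lambda>)" using dL dL1 by simp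
    ultimately show ?thesis by (metis dim_span psubsetI)
  qed
  then obtain a where a: "a \<noteq> 0" "a \<in> span \<Lambda>" "\<And>y. y \<in> span \<Lambda>' \<Longrightarrow> orthogonal a y"
    using orthogonal_to_subspace_exists_gen by metis
  have aL1: "a \<notin> span \<Lambda>'" using a orthogonal_self by blast
  have av: "v \<bullet> a \<noteq> 0"
  proof
    assume va: "v \<bullet> a = 0"
    have "insert a \<Lambda>' \<subseteq> span \<Lambda>" using a(2) L1 span_superset by blast
    moreover have "dim (span \<Lambda>) \<le> dim (insert a \<Lambda>')" using dim_insert[of a \<Lambda>'] aL1 dL dL1 by simp
    ultimately have "span (insert a \<Lambda>') = span (span \<Lambda>)" using dim_eq_span by blast
    then have "v \<in> span (insert a \<Lambda>')" using vL(1) by (simp add: span_span span_base)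
    then obtain t where t: "v - t *\<^sub>R a \<in> span \<Lambda>'" using span_insert by blast
    then have "a \<bullet> (v - t *\<^sub>R a) = 0" using a(3) unfolding orthogonal_def by blast
    then have "t * (a \<bullet> a) = 0" using va by (simp add: inner_diff_right inner_commute)
    then have "t = 0" using a(1) by simp
    then show False using t nv1 by simp
  qed
  obtain u0 where u0: "u0 \<in> \<Lambda>''" "u0 \<bullet> a \<noteq> 0"
  proof -
    have "\<exists>u0\<in>\<Lambda>''. u0 \<bullet> a \<noteq> 0"
    proof (rule ccontr)
      assume "\<not> ?thesis"
      then have "\<And>y. y \<in> \<Lambda>' \<union> \<Lambda>'' \<Longrightarrow> orthogonal a y"
        using a(3) span_superset unfolding orthogonal_def by (auto simp: inner_commute)
      moreover have "a \<in> span (\<Lambda>' \<union> \<Lambda>'')" using a(2) LS by (metis span_minimal subspace_span subsetD)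
      ultimately have "orthogonal a a" using orthogonal_to_span by blast
      then show False using a(1) orthogonal_self by blast
    qed
    then show ?thesis using that by blast
  qed
  define T where "T = span (outer_sq ` min_vectors \<Lambda>)"
  define \<psi> where "\<psi> = (\<lambda>M::real^'n^'n. M *v a)"
  have lin: "linear \<psi>" unfolding \<psi>_def by (rule linear_mv)
  have \<psi>o: "\<psi> (outer_sq x) = (x \<bullet> a) *\<^sub>R x" for x unfolding \<psi>_def by (rule outer_mv)
  have subT: "subspace T" unfolding T_def by simp
  have sub2: "outer_sq ` span \<Lambda>'' \<subseteq> T"
  proof -
    have i: "outer_sq ` min_vectors \<Lambda>'' \<subseteq> outer_sq ` span \<Lambda>''"
      unfolding min_vectors_def using span_superset by blast
    have "dim (outer_sq ` span \<Lambda>'') \<le> dim (outer_sq ` min_vectors \<Lambda>'')"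
      using outer_sq_span_dim[of \<Lambda>''] p2 dL2 by simp
    then have "span (outer_sq ` min_vectors \<Lambda>'') = span (outer_sq ` span \<Lambda>'')"
      using dim_eq_span[OF i] by blast
    then have "outer_sq ` span \<Lambda>'' \<subseteq> span (outer_sq ` min_vectors \<Lambda>'')" by (simp add: span_superset)
    also have "\<dots> \<subseteq> T" unfolding T_def using MV2 by (intro span_mono image_mono)
    finally show ?thesis .
  qed
  have subI: "subspace (\<psi> ` T)" using lin subT by (rule linear_subspace_image)
  have imv: "v \<in> \<psi> ` T"
  proof -
    have "outer_sq v \<in> T" unfolding T_def using assms(14) by (intro span_base imageI)
    then have "(1 / (v \<bullet> a)) *\<^sub>R outer_sq v \<in> T" using subT by (simp add: subspace_scale)
    moreover have "\<psi> ((1 / (v \<bullet> a)) *\<^sub>R outer_sq v) = v"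
      using av by (simp add: linear_scale[OF lin] \<psi>o)
    ultimately show ?thesis by (metis image_eqI)
  qed
  have imu: "u \<in> \<psi> ` T" if u: "u \<in> \<Lambda>''" for u
  proof -
    have "u \<in> span \<Lambda>''" "u0 \<in> span \<Lambda>''" "u + u0 \<in> span \<Lambda>''"
      using u u0(1) by (auto intro: span_base span_add)
    then have o: "outer_sq u \<in> T" "outer_sq u0 \<in> T" "outer_sq (u + u0) \<in> T" using sub2 by auto
    define N where "N = (1 / (u0 \<bullet> a)) *\<^sub>R (outer_sq (u + u0) - outer_sq u - outer_sq u0
        - ((u \<bullet> a) / (u0 \<bullet> a)) *\<^sub>R outer_sq u0)"
    have "N \<in> T" unfolding N_def using o subT
      by (intro subspace_scale subspace_diff) auto
    moreover have "\<psi> N = u"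
    proof -
      have "\<psi> N = (1 / (u0 \<bullet> a)) *\<^sub>R (((u + u0) \<bullet> a) *\<^sub>R (u + u0) - (u \<bullet> a) *\<^sub>R u - (u0 \<bullet> a) *\<^sub>R u0
        - ((u \<bullet> a) / (u0 \<bullet> a)) *\<^sub>R ((u0 \<bullet> a) *\<^sub>R u0))"
        unfolding N_def by (simp add: linear_scale[OF lin] linear_diff[OF lin] \<psi>o)
      also have "\<dots> = u" using u0(2)
        by (simp add: inner_add_left algebra_simps)
      finally show ?thesis .
    qed
    ultimately show ?thesis by (metis image_eqI)
  qed
  have dimI: "d \<le> dim (\<psi> ` T)"
  proof -
    have "span (insert v \<Lambda>'') \<subseteq> \<psi> ` T" using imv imu subI by (intro span_minimal) auto
    then have "dim (span (insert v \<Lambda>'')) \<le> dim (\<psi> ` T)" by (rule dim_subset)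
    then have "dim (insert v \<Lambda>'') \<le> dim (\<psi> ` T)" by (simp only: dim_span)
    moreover have "dim (insert v \<Lambda>'') = d" using dim_insert[of v \<Lambda>''] nv2 dL2 by simp
    ultimately show ?thesis by simp
  qed
  define K where "K = T \<inter> {M. \<psi> M = 0}"
  have subK: "subspace K" unfolding K_def
    using subT linear_subspace_kernel[OF lin] by (rule subspace_inter)
  have dimK: "d choose 2 \<le> dim K"
  proof -
    have "outer_sq ` min_vectors \<Lambda>' \<subseteq> K"
    proof
      fix M assume "M \<in> outer_sq ` min_vectors \<Lambda>'"
      then obtain u where u: "u \<in> min_vectors \<Lambda>'" "M = outer_sq u" by blast
      have "M \<in> T" unfolding T_def using u MV1 by (auto intro: span_base)
      moreover have "u \<bullet> a = 0" using a(3)[of u] u(1) span_superset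
        unfolding min_vectors_def orthogonal_def by (auto simp: inner_commute)
      ultimately show "M \<in> K" unfolding K_def using u \<psi>o by simp
    qed
    then show ?thesis using p1 dim_subset by metis
  qed
  \<comment> \<open>rank-nullity\<close>
  define Q where "Q = {y \<in> T. \<forall>x \<in> K. orthogonal x y}"
  have KT: "K \<subseteq> T" unfolding K_def by auto
  have dQ: "dim Q + dim K = dim T" unfolding Q_def
    by (rule dim_subspace_orthogonal_to_vectors[OF subK subT KT])
  have subQ: "subspace Q"
  proof -
    have "Q = T \<inter> {y. \<forall>x \<in> K. orthogonal x y}" unfolding Q_def by auto
    then show ?thesis using subspace_inter[OF subT subspace_orthogonal_to_vectors[of K]] by simp
  qed
  have injQ: "inj_on \<psi> (span Q)"
  proof -
    have sQ: "span Q = Q" using subQ span_eq_iff by blast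
    have iQ: "inj_on \<psi> Q"
    proof (subst linear_inj_on_iff_eq_0[OF lin subQ], intro ballI impI)
      fix M assume M: "M \<in> Q" "\<psi> M = 0"
      then have "M \<in> K" unfolding K_def Q_def by auto
      then have "orthogonal M M" using M(1) unfolding Q_def by auto
      then show "M = 0" by (simp add: orthogonal_self)
    qed
    show ?thesis unfolding sQ by (rule iQ)
  qed
  have "\<psi> ` T \<subseteq> \<psi> ` Q"
  proof
    fix y assume "y \<in> \<psi> ` T"
    then obtain M where M: "M \<in> T" "y = \<psi> M" by blast
    obtain p z where pz: "p \<in> span K" "\<And>w. w \<in> span K \<Longrightarrow> orthogonal z w" "M = p + z"
      using orthogonal_subspace_decomp_exists[of K M] by metis
    have sK: "span K = K" using subK span_eq_iff by blast
    have pK: "p \<in> K" using pz(1) unfolding sK .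
    have zT: "z \<in> T" using pz(3) M(1) pK KT subT by (metis add_diff_cancel_left' subsetD subspace_diff)
    have "z \<in> Q" unfolding Q_def using zT pz(2) span_superset
      by (auto simp: orthogonal_commute)
    moreover have "\<psi> M = \<psi> z" using pz(3) pK linear_add[OF lin] unfolding K_def by simp
    ultimately show "y \<in> \<psi> ` Q" using M by blast
  qed
  then have "dim (\<psi> ` T) \<le> dim (\<psi> ` Q)" by (rule dim_subset)
  also have "\<dots> = dim Q" using dim_image_eq[OF lin injQ] .
  finally have lower: "(d + 1) choose 2 \<le> dim T" using dimI dimK dQ dL1
    by (simp add: numeral_2_eq_2)
  have upper: "dim T \<le> (d + 1) choose 2"
  proof -
    have "outer_sq ` min_vectors \<Lambda> \<subseteq> outer_sq ` span \<Lambda>"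
      unfolding min_vectors_def using span_superset by blast
    then have "dim T \<le> dim (outer_sq ` span \<Lambda>)" unfolding T_def by (simp add: dim_subset)
    also have "\<dots> \<le> (d + 1) choose 2" using outer_sq_span_dim[of \<Lambda>] dL by simp
    finally show ?thesis .
  qed
  show ?thesis unfolding perfect_def lattice_rank_def using lower upper dL unfolding T_def by simp
qed


end
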